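(* Let $G$ be a cubic graph. If $G=G_1\,H\,G_2$ or $G=G_1\,Y\,G_2$, then $G$ is bipartite if and only if $G_1$ and $G_2$ are both bipartite.
   Context: Graphs are finite; multiple edges allowed, loops not. For cubic graphs $G_1,G_2$: $G_1\,Y\,G_2$ is obtained by choosing a vertex $v_1\in G_1$ with neighbors (via its three incident edges) $s_{11},s_{12},s_{13}$ and a vertex $v_2\in G_2$ with neighbors $s_{21},s_{22},s_{23}$, deleting $v_1,v_2$, and adding edges $s_{1j}s_{2j}$ ($j=1,2,3$); equivalently, $G=G_1\,Y\,G_2$ means $G$ has a $3$-edge cut whose two sides, each completed by a new vertex joined to the three cut endpoints on that side, are $G_1$ and $G_2$. $G_1\,H\,G_2$ is obtained by choosing edges $s_{11}s_{12}\in G_1$ and $s_{21}s_{22}\in G_2$, deleting them and adding $s_{11}s_{21}$, $s_{12}s_{22}$; equivalently, $G$ has a $2$-edge cut whose two sides, each completed by an edge joining the two cut endpoints on that side, are $G_1$ and $G_2$. In the decomposition direction the cuts are nontrivial, i.e. $G_1$ and $G_2$ each have fewer vertices than $G$. *)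

theory Defs
  imports Main
begin

text \<open>Finite multigraphs without loops: a vertex set, a set of edge identifiers,
  and for each edge its set of (exactly two, distinct) endpoints.\<close>

record ('v, 'e) mgraph =
  verts :: "'v set"
  edges :: "'e set"
  ends  :: "'e \<Rightarrow> 'v set"

definition wf_mgraph :: "('v, 'e) mgraph \<Rightarrow> bool" where
  "wf_mgraph G \<longleftrightarrow> finite (verts G) \<and> finite (edges G) \<and>
     (\<forall>e\<in>edges G. ends G e \<subseteq> verts G \<and> card (ends G e) = 2)"

definition incident_edges :: "('v, 'e) mgraph \<Rightarrow> 'v \<Rightarrow> 'e set" where
  "incident_edges G v = {e \<in> edges G. v \<in> ends G e}"

definition degree :: "('v, 'e) mgraph \<Rightarrow> 'v \<Rightarrow> nat" where
  "degree G v = card (incident_edges G v)"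

definition cubic :: "('v, 'e) mgraph \<Rightarrow> bool" where
  "cubic G \<longleftrightarrow> wf_mgraph G \<and> (\<forall>v\<in>verts G. degree G v = 3)"

definition bipartite :: "('v, 'e) mgraph \<Rightarrow> bool" where
  "bipartite G \<longleftrightarrow> (\<exists>c :: 'v \<Rightarrow> bool. \<forall>e\<in>edges G. \<forall>x\<in>ends G e. \<forall>y\<in>ends G e.
       x \<noteq> y \<longrightarrow> c x \<noteq> c y)"

definition mg_iso :: "('v, 'e) mgraph \<Rightarrow> ('w, 'f) mgraph \<Rightarrow> bool" where
  "mg_iso G G' \<longleftrightarrow> (\<exists>f g. bij_betw f (verts G) (verts G') \<and> bij_betw g (edges G) (edges G') \<and>
       (\<forall>e\<in>edges G. ends G' (g e) = f ` ends G e))"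

definition other_end :: "('v, 'e) mgraph \<Rightarrow> 'v \<Rightarrow> 'e \<Rightarrow> 'v" where
  "other_end G v e = the_elem (ends G e - {v})"

definition H_op :: "('v1, 'e1) mgraph \<Rightarrow> 'v1 \<Rightarrow> 'v1 \<Rightarrow> 'e1 \<Rightarrow>
                    ('v2, 'e2) mgraph \<Rightarrow> 'v2 \<Rightarrow> 'v2 \<Rightarrow> 'e2 \<Rightarrow>
                    ('v1 + 'v2, 'e1 + 'e2 + bool) mgraph" where
  "H_op G1 x1 y1 a G2 x2 y2 b =
    \<lparr> verts = Inl ` verts G1 \<union> Inr ` verts G2,
      edges = Inl ` (edges G1 - {a}) \<union> Inr ` Inl ` (edges G2 - {b}) \<union> {Inr (Inr True), Inr (Inr False)},
      ends = (\<lambda>e. case e of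
                Inl e1 \<Rightarrow> Inl ` ends G1 e1
              | Inr (Inl e2) \<Rightarrow> Inr ` ends G2 e2
              | Inr (Inr True) \<Rightarrow> {Inl x1, Inr x2}
              | Inr (Inr False) \<Rightarrow> {Inl y1, Inr y2}) \<rparr>"

definition H_valid :: "('v1, 'e1) mgraph \<Rightarrow> 'v1 \<Rightarrow> 'v1 \<Rightarrow> 'e1 \<Rightarrow>
                       ('v2, 'e2) mgraph \<Rightarrow> 'v2 \<Rightarrow> 'v2 \<Rightarrow> 'e2 \<Rightarrow> bool" where
  "H_valid G1 x1 y1 a G2 x2 y2 b \<longleftrightarrow>
     a \<in> edges G1 \<and> ends G1 a = {x1, y1} \<and> b \<in> edges G2 \<and> ends G2 b = {x2, y2}"

definition Y_op :: "('v1, 'e1) mgraph \<Rightarrow> 'v1 \<Rightarrow> (nat \<Rightarrow> 'e1) \<Rightarrow>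
                    ('v2, 'e2) mgraph \<Rightarrow> 'v2 \<Rightarrow> (nat \<Rightarrow> 'e2) \<Rightarrow>
                    ('v1 + 'v2, 'e1 + 'e2 + nat) mgraph" where
  "Y_op G1 v1 f1 G2 v2 f2 =
    \<lparr> verts = Inl ` (verts G1 - {v1}) \<union> Inr ` (verts G2 - {v2}),
      edges = Inl ` (edges G1 - incident_edges G1 v1) \<union> Inr ` Inl ` (edges G2 - incident_edges G2 v2)
              \<union> Inr ` Inr ` {0..<3},
      ends = (\<lambda>e. case e of
                Inl e1 \<Rightarrow> Inl ` ends G1 e1
              | Inr (Inl e2) \<Rightarrow> Inr ` ends G2 e2
              | Inr (Inr j) \<Rightarrow> {Inl (other_end G1 v1 (f1 j)), Inr (other_end G2 v2 (f2 j))}) \<rparr>"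

definition Y_valid :: "('v1, 'e1) mgraph \<Rightarrow> 'v1 \<Rightarrow> (nat \<Rightarrow> 'e1) \<Rightarrow>
                       ('v2, 'e2) mgraph \<Rightarrow> 'v2 \<Rightarrow> (nat \<Rightarrow> 'e2) \<Rightarrow> bool" where
  "Y_valid G1 v1 f1 G2 v2 f2 \<longleftrightarrow>
     v1 \<in> verts G1 \<and> bij_betw f1 {0..<3} (incident_edges G1 v1) \<and>
     v2 \<in> verts G2 \<and> bij_betw f2 {0..<3} (incident_edges G2 v2)"

definition is_H_sum :: "('v, 'e) mgraph \<Rightarrow> ('v1, 'e1) mgraph \<Rightarrow> ('v2, 'e2) mgraph \<Rightarrow> bool" where
  "is_H_sum G G1 G2 \<longleftrightarrow> cubic G1 \<and> cubic G2 \<and>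
     (\<exists>x1 y1 a x2 y2 b. H_valid G1 x1 y1 a G2 x2 y2 b \<and> mg_iso G (H_op G1 x1 y1 a G2 x2 y2 b))"

definition is_Y_sum :: "('v, 'e) mgraph \<Rightarrow> ('v1, 'e1) mgraph \<Rightarrow> ('v2, 'e2) mgraph \<Rightarrow> bool" where
  "is_Y_sum G G1 G2 \<longleftrightarrow> cubic G1 \<and> cubic G2 \<and>
     (\<exists>v1 f1 v2 f2. Y_valid G1 v1 f1 G2 v2 f2 \<and> mg_iso G (Y_op G1 v1 f1 G2 v2 f2))"

end

theory Submission
  imports Defs
begin

lemma card_filter_sum: "finite E \<Longrightarrow> card {e\<in>E. P e} = (\<Sum>e\<in>E. if P e then 1 else 0)"
  using sum.inter_filter[of E "\<lambda>_. (1::nat)" P] by simp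

lemma deg_sum:
  assumes "finite A" "finite E"
  shows "(\<Sum>u\<in>A. card {e\<in>E. u \<in> ends G e}) = (\<Sum>e\<in>E. card (ends G e \<inter> A))"
proof -
  have "(\<Sum>u\<in>A. card {e\<in>E. u \<in> ends G e}) = (\<Sum>u\<in>A. \<Sum>e\<in>E. if u \<in> ends G e then 1 else 0)"
    using assms by (simp add: card_filter_sum)
  also have "\<dots> = (\<Sum>e\<in>E. \<Sum>u\<in>A. if u \<in> ends G e then 1 else 0)" by (rule sum.swap)
  also have "\<dots> = (\<Sum>e\<in>E. card (ends G e \<inter> A))"
  proof (rule sum.cong[OF refl])
    fix e assume "e\<in>E"
    have "card (ends G e \<inter> A) = card {u\<in>A. u \<in> ends G e}" by (rule arg_cong[where f=card]) auto
    then show "(\<Sum>u\<in>A. if u \<in> ends G e then 1 else 0) = card (ends G e \<inter> A)"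
      using assms card_filter_sum[of A "\<lambda>u. u\<in>ends G e"] by simp
  qed
  finally show ?thesis .
qed

lemma parity:
  assumes cub: "cubic G" and S: "S \<subseteq> edges G"
    and pr: "\<forall>e\<in>edges G - S. \<forall>x\<in>ends G e. \<forall>y\<in>ends G e. x \<noteq> y \<longrightarrow> c x \<noteq> c y"
  shows "3 * int (card {u\<in>verts G. c u}) - 3 * int (card {u\<in>verts G. \<not> c u})
     = (\<Sum>e\<in>S. int (card (ends G e \<inter> {u\<in>verts G. c u})) - int (card (ends G e \<inter> {u\<in>verts G. \<not> c u})))"
proof -
  have wf: "wf_mgraph G" using cub by (simp add: cubic_def)
  have fV: "finite (verts G)" and fE: "finite (edges G)" using wf by (auto simp: wf_mgraph_def)
  have fS: "finite S" using S fE finite_subset by blast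
  have gen: "3 * card {u\<in>verts G. P u} = card (edges G - S) + (\<Sum>e\<in>S. card (ends G e \<inter> {u\<in>verts G. P u}))"
    if one: "\<forall>e\<in>edges G - S. card (ends G e \<inter> {u\<in>verts G. P u}) = 1" for P
  proof -
    let ?A = "{u\<in>verts G. P u}"
    have fA: "finite ?A" using fV by simp
    have "3 * card ?A = (\<Sum>u\<in>?A. card {e\<in>edges G. u \<in> ends G e})"
      using cub by (simp add: cubic_def degree_def incident_edges_def)
    also have "\<dots> = (\<Sum>e\<in>edges G. card (ends G e \<inter> ?A))" by (rule deg_sum[OF fA fE])
    also have "\<dots> = (\<Sum>e\<in>edges G - S. card (ends G e \<inter> ?A)) + (\<Sum>e\<in>S. card (ends G e \<inter> ?A))"
      using sum.subset_diff[OF S fE] by simp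
    also have "(\<Sum>e\<in>edges G - S. card (ends G e \<inter> ?A)) = card (edges G - S)"
      using one by simp
    finally show ?thesis .
  qed
  have one: "card (ends G e \<inter> {u\<in>verts G. c u}) = 1 \<and> card (ends G e \<inter> {u\<in>verts G. \<not> c u}) = 1"
    if e: "e \<in> edges G - S" for e
  proof -
    have sub: "ends G e \<subseteq> verts G" and c2: "card (ends G e) = 2" using wf e by (auto simp: wf_mgraph_def)
    then obtain x y where xy: "ends G e = {x,y}" "x \<noteq> y" by (meson card_2_iff)
    have xyV: "x \<in> verts G" "y \<in> verts G" using sub xy by auto
    have cxy: "c x \<noteq> c y" using pr e xy by auto
    show ?thesis
    proof (cases "c x")
      case True
      then have "ends G e \<inter> {u\<in>verts G. c u} = {x}" "ends G e \<inter> {u\<in>verts G. \<not> c u} = {y}"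
        using xy xyV cxy by auto
      then show ?thesis by simp
    next
      case False
      then have "ends G e \<inter> {u\<in>verts G. c u} = {y}" "ends G e \<inter> {u\<in>verts G. \<not> c u} = {x}"
        using xy xyV cxy by auto
      then show ?thesis by simp
    qed
  qed
  have T: "3 * card {u\<in>verts G. c u} = card (edges G - S) + (\<Sum>e\<in>S. card (ends G e \<inter> {u\<in>verts G. c u}))"
    using gen[of c] one by auto
  have F: "3 * card {u\<in>verts G. \<not> c u} = card (edges G - S) + (\<Sum>e\<in>S. card (ends G e \<inter> {u\<in>verts G. \<not> c u}))"
    using gen[of "\<lambda>u. \<not> c u"] one by auto
  have "(\<Sum>e\<in>S. int (card (ends G e \<inter> {u\<in>verts G. c u})) - int (card (ends G e \<inter> {u\<in>verts G. \<not> c u})))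
     = int (\<Sum>e\<in>S. card (ends G e \<inter> {u\<in>verts G. c u})) - int (\<Sum>e\<in>S. card (ends G e \<inter> {u\<in>verts G. \<not> c u}))"
    by (simp add: sum_subtractf)
  then show ?thesis using T F by linarith
qed


lemma wf_ends:
  assumes "wf_mgraph G" "e \<in> edges G"
  shows "\<exists>x y. ends G e = {x,y} \<and> x \<noteq> y \<and> x \<in> verts G \<and> y \<in> verts G"
proof -
  have sub: "ends G e \<subseteq> verts G" and c2: "card (ends G e) = 2" using assms by (auto simp: wf_mgraph_def)
  then obtain x y where xy: "ends G e = {x,y}" "x \<noteq> y" by (meson card_2_iff)
  then show ?thesis using sub by auto
qed

lemma other_end_props:
  assumes wf: "wf_mgraph G" and e: "e \<in> incident_edges G v"
  shows "ends G e = {v, other_end G v e} \<and> other_end G v e \<noteq> v \<and> other_end G v e \<in> verts G \<and> e \<in> edges G"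
proof -
  have eE: "e \<in> edges G" and ve: "v \<in> ends G e" using e by (auto simp: incident_edges_def)
  obtain x y where xy: "ends G e = {x,y}" "x \<noteq> y" "x \<in> verts G" "y \<in> verts G"
    using wf_ends[OF wf eE] by blast
  show ?thesis
  proof (cases "v = x")
    case True
    then have "ends G e - {v} = {y}" using xy by auto
    then have "other_end G v e = y" by (simp add: other_end_def)
    then show ?thesis using xy True eE by auto
  next
    case False
    then have vy: "v = y" using ve xy by auto
    then have "ends G e - {v} = {x}" using xy by auto
    then have "other_end G v e = x" by (simp add: other_end_def)
    then show ?thesis using xy vy eE by auto
  qed
qed

lemma bipartiteI:
  "\<forall>e\<in>edges G. \<forall>x\<in>ends G e. \<forall>y\<in>ends G e. x \<noteq> y \<longrightarrow> c x \<noteq> (c y :: bool) \<Longrightarrow> bipartite G"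
  unfolding bipartite_def by blast

lemma properD:
  assumes "\<forall>e\<in>E. \<forall>x\<in>ends G e. \<forall>y\<in>ends G e. x \<noteq> y \<longrightarrow> c x \<noteq> (c y :: bool)"
    "e \<in> E" "x \<in> ends G e" "y \<in> ends G e" "x \<noteq> y"
  shows "c x \<noteq> c y"
  using assms(1)[rule_format, OF assms(2-5)] .

lemma image_proper:
  assumes "\<forall>x\<in>S. \<forall>y\<in>S. x \<noteq> y \<longrightarrow> d x \<noteq> (d y :: bool)" and "\<forall>x. c (h x) = d x"
  shows "\<forall>p\<in>h ` S. \<forall>q\<in>h ` S. p \<noteq> q \<longrightarrow> c p \<noteq> c q"
proof (intro ballI impI)
  fix p q assume "p \<in> h ` S" "q \<in> h ` S" "p \<noteq> q"
  then obtain x y where xy: "x\<in>S" "y\<in>S" "p = h x" "q = h y" by blast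
  then have "x \<noteq> y" using \<open>p \<noteq> q\<close> by blast
  then have "d x \<noteq> d y" using assms(1)[rule_format, OF xy(1,2)] by simp
  then show "c p \<noteq> c q" using assms(2) xy(3,4) by simp
qed

lemma proper_pair: "f A \<noteq> f B \<Longrightarrow> \<forall>p\<in>{A,B}. \<forall>q\<in>{A,B}. p \<noteq> q \<longrightarrow> f p \<noteq> f q"
  by auto

lemma H_side:
  assumes cub: "cubic G" and a: "a \<in> edges G" and ea: "ends G a = {x,y}"
    and pr: "\<forall>e\<in>edges G - {a}. \<forall>p\<in>ends G e. \<forall>q\<in>ends G e. p \<noteq> q \<longrightarrow> c p \<noteq> (c q :: bool)"
  shows "c x \<noteq> c y"
proof
  assume same: "c x = c y"
  have wf: "wf_mgraph G" using cub by (simp add: cubic_def)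
  obtain x' y' where xy: "ends G a = {x',y'}" "x' \<noteq> y'" "x' \<in> verts G" "y' \<in> verts G"
    using wf_ends[OF wf a] by blast
  have sub: "ends G a \<subseteq> verts G" using wf a by (simp add: wf_mgraph_def)
  have V: "x \<in> verts G" "y \<in> verts G" using sub ea by auto
  have ne: "x \<noteq> y"
  proof
    assume "x = y" then have ex: "ends G a = {x}" using ea by simp
    have "card (ends G a) = 2" using wf a by (simp add: wf_mgraph_def)
    then show False using ex by simp
  qed
  have sa: "{a} \<subseteq> edges G" using a by simp
  note P0 = parity[OF cub sa pr]
  have P: "3 * int (card {u\<in>verts G. c u}) - 3 * int (card {u\<in>verts G. \<not> c u})
     = int (card ({x,y} \<inter> {u\<in>verts G. c u})) - int (card ({x,y} \<inter> {u\<in>verts G. \<not> c u}))"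
    using P0 ea by simp
  have c2: "card {x,y} = 2" using ne by simp
  have "3 * (int (card {u\<in>verts G. c u}) - int (card {u\<in>verts G. \<not> c u})) = 2 \<or>
        3 * (int (card {u\<in>verts G. c u}) - int (card {u\<in>verts G. \<not> c u})) = - 2"
  proof (cases "c x")
    case True
    then have "{x,y} \<inter> {u\<in>verts G. c u} = {x,y}" "{x,y} \<inter> {u\<in>verts G. \<not> c u} = {}"
      using same V by auto
    then show ?thesis using P c2 by (simp add: right_diff_distrib)
  next
    case False
    then have "{x,y} \<inter> {u\<in>verts G. c u} = {}" "{x,y} \<inter> {u\<in>verts G. \<not> c u} = {x,y}"
      using same V by auto
    then show ?thesis using P c2 by (simp add: right_diff_distrib)
  qed
  then show False by presburger
qed

lemma H_side_bip:
  assumes cub: "cubic G" and a: "a \<in> edges G" and ea: "ends G a = {x,y}"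
    and pr: "\<forall>e\<in>edges G - {a}. \<forall>p\<in>ends G e. \<forall>q\<in>ends G e. p \<noteq> q \<longrightarrow> c p \<noteq> (c q :: bool)"
  shows "bipartite G"
proof -
  have "c x \<noteq> c y" by (rule H_side[OF assms])
  then have A: "\<forall>p\<in>ends G a. \<forall>q\<in>ends G a. p \<noteq> q \<longrightarrow> c p \<noteq> c q" unfolding ea by (rule proper_pair[of c x y])
  show ?thesis 
  proof (rule bipartiteI[of _ c], rule ballI)
    fix e assume "e \<in> edges G"
    show "\<forall>p\<in>ends G e. \<forall>q\<in>ends G e. p \<noteq> q \<longrightarrow> c p \<noteq> c q"
    proof (cases "e = a")
      case True then show ?thesis using A by (simp only:)
    next
      case False then have "e \<in> edges G - {a}" using \<open>e \<in> edges G\<close> by simp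
      then show ?thesis using pr by (rule bspec[rotated])
    qed
  qed
qed


lemma Y_side:
  assumes cub: "cubic G" and v: "v \<in> verts G"
    and pr: "\<forall>e\<in>edges G - incident_edges G v. \<forall>p\<in>ends G e. \<forall>q\<in>ends G e. p \<noteq> q \<longrightarrow> c p \<noteq> (c q :: bool)"
  shows "bipartite G"
proof -
  let ?I = "incident_edges G v"
  let ?oe = "other_end G v"
  have wf: "wf_mgraph G" using cub by (simp add: cubic_def)
  define c' where "c' = c(v := True)"
  have nv: "v \<notin> ends G e" if "e \<in> edges G - ?I" for e
    using that by (auto simp: incident_edges_def)
  have pr': "\<forall>e\<in>edges G - ?I. \<forall>p\<in>ends G e. \<forall>q\<in>ends G e. p \<noteq> q \<longrightarrow> c' p \<noteq> c' q"
  proof (intro ballI impI)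
    fix e p q assume e: "e \<in> edges G - ?I" and p: "p \<in> ends G e" and q: "q \<in> ends G e" and "p \<noteq> q"
    then have "c p \<noteq> c q" using properD[OF pr e p q] by simp
    moreover have "p \<noteq> v" "q \<noteq> v" using nv[OF e] p q by auto
    ultimately show "c' p \<noteq> c' q" by (simp add: c'_def)
  qed
  have Isub: "?I \<subseteq> edges G" by (auto simp: incident_edges_def)
  have fE: "finite (edges G)" using wf by (simp add: wf_mgraph_def)
  have fI: "finite ?I" using Isub fE finite_subset by blast
  have cI: "card ?I = 3" using cub v by (simp add: cubic_def degree_def)
  note P0 = parity[OF cub Isub pr']
  have trm: "int (card (ends G e \<inter> {u\<in>verts G. c' u})) - int (card (ends G e \<inter> {u\<in>verts G. \<not> c' u}))
      = 2 * (if c (?oe e) then 1 else 0)" if e: "e \<in> ?I" for e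
  proof -
    note oe = other_end_props[OF wf e]
    have cv: "c' v = True" and cw: "c' (?oe e) = c (?oe e)" using oe by (auto simp: c'_def)
    show ?thesis
    proof (cases "c (?oe e)")
      case True
      then have "ends G e \<inter> {u\<in>verts G. c' u} = {v, ?oe e}" "ends G e \<inter> {u\<in>verts G. \<not> c' u} = {}"
        using oe v cv cw by auto
      moreover have "card {v, ?oe e} = 2" using oe by auto
      ultimately show ?thesis using True oe by simp
    next
      case False
      then have "ends G e \<inter> {u\<in>verts G. c' u} = {v}" "ends G e \<inter> {u\<in>verts G. \<not> c' u} = {?oe e}"
        using oe v cv cw by auto
      then show ?thesis using False by simp
    qed
  qed
  define k where "k = card {e\<in>?I. c (?oe e)}"
  have kI: "int k = (\<Sum>e\<in>?I. if c (?oe e) then 1 else 0)"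
    unfolding k_def using card_filter_sum[OF fI, of "\<lambda>e. c (?oe e)"] by (auto simp add: of_nat_sum intro!: sum.cong)
  have "3 * int (card {u\<in>verts G. c' u}) - 3 * int (card {u\<in>verts G. \<not> c' u})
      = (\<Sum>e\<in>?I. 2 * (if c (?oe e) then 1 else 0))"
    using P0 trm by simp
  also have "\<dots> = 2 * int k" using kI by (simp add: sum_distrib_left)
  finally have eq: "3 * (int (card {u\<in>verts G. c' u}) - int (card {u\<in>verts G. \<not> c' u})) = 2 * int k"
    by (simp add: right_diff_distrib)
  have ksub: "{e\<in>?I. c (?oe e)} \<subseteq> ?I" by blast
  have kle: "k \<le> 3" unfolding k_def using card_mono[OF fI ksub] cI by simp
  have "k = 0 \<or> k = 3"
  proof (rule ccontr)
    assume "\<not> (k = 0 \<or> k = 3)"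
    then have "k = 1 \<or> k = 2" using kle by linarith
    then show False using eq by presburger
  qed
  then show ?thesis
  proof
    assume "k = 0"
    then have allF: "\<forall>e\<in>?I. \<not> c (?oe e)" unfolding k_def using fI by auto
    show ?thesis 
    proof (rule bipartiteI[of _ c'], rule ballI)
      fix e assume eE: "e \<in> edges G"
      show "\<forall>p\<in>ends G e. \<forall>q\<in>ends G e. p \<noteq> q \<longrightarrow> c' p \<noteq> c' q"
      proof (cases "e \<in> ?I")
        case True
        note oe = other_end_props[OF wf True]
        have "c' v \<noteq> c' (?oe e)" using oe allF True by (auto simp: c'_def)
        then show ?thesis unfolding conjunct1[OF oe] by (rule proper_pair[of c' v "?oe e"])
      next
        case False then have "e \<in> edges G - ?I" using eE by simp
        then show ?thesis using pr' by (rule bspec[rotated])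
      qed
    qed
  next
    assume "k = 3"
    then have "{e\<in>?I. c (?oe e)} = ?I" unfolding k_def using card_subset_eq[OF fI ksub] cI by simp
    then have allT: "\<forall>e\<in>?I. c (?oe e)" by blast
    define c'' where "c'' = c(v := False)"
    show ?thesis 
    proof (rule bipartiteI[of _ c''], rule ballI)
      fix e assume eE: "e \<in> edges G"
      show "\<forall>p\<in>ends G e. \<forall>q\<in>ends G e. p \<noteq> q \<longrightarrow> c'' p \<noteq> c'' q"
      proof (cases "e \<in> ?I")
        case True
        note oe = other_end_props[OF wf True]
        have "c'' v \<noteq> c'' (?oe e)" using oe allT True by (auto simp: c''_def)
        then show ?thesis unfolding conjunct1[OF oe] by (rule proper_pair[of c'' v "?oe e"])
      next
        case False
        show ?thesis
        proof (intro ballI impI)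
          fix p q assume p: "p \<in> ends G e" and q: "q \<in> ends G e" and "p \<noteq> q"
          moreover have "e \<in> edges G - ?I" using eE False by simp
          ultimately have "c p \<noteq> c q" using properD[OF pr _ p q] by simp
          moreover have "p \<noteq> v" "q \<noteq> v" using nv eE False p q by auto
          ultimately show "c'' p \<noteq> c'' q" by (simp add: c''_def)
        qed
      qed
    qed
  qed
qed

lemma iso_bip:
  assumes wf: "wf_mgraph G" and iso: "mg_iso G G'"
  shows "bipartite G \<longleftrightarrow> bipartite G'"
proof -
  obtain f g where f: "bij_betw f (verts G) (verts G')" and g: "bij_betw g (edges G) (edges G')"
    and en: "\<forall>e\<in>edges G. ends G' (g e) = f ` ends G e"
    using iso unfolding mg_iso_def by blast
  have sub: "\<forall>e\<in>edges G. ends G e \<subseteq> verts G" using wf by (simp add: wf_mgraph_def)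
  have inj: "inj_on f (verts G)" using f bij_betw_imp_inj_on by blast
  show ?thesis
  proof
    assume "bipartite G"
    then obtain c where c: "\<forall>e\<in>edges G. \<forall>x\<in>ends G e. \<forall>y\<in>ends G e. x \<noteq> y \<longrightarrow> c x \<noteq> (c y :: bool)"
      unfolding bipartite_def by blast
    show "bipartite G'" 
    proof (rule bipartiteI[of _ "\<lambda>u. c (inv_into (verts G) f u)"], intro ballI impI)
      fix e' x' y' assume e': "e' \<in> edges G'" and x': "x' \<in> ends G' e'" and y': "y' \<in> ends G' e'" and ne: "x' \<noteq> y'"
      obtain e where e: "e \<in> edges G" "e' = g e" using g e' by (metis bij_betw_imp_surj_on imageE)
      then have "ends G' e' = f ` ends G e" using en by simp
      then obtain x y where xy: "x \<in> ends G e" "y \<in> ends G e" "x' = f x" "y' = f y" using x' y' by auto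
      have V: "x \<in> verts G" "y \<in> verts G" using sub e xy by auto
      have "inv_into (verts G) f x' = x" "inv_into (verts G) f y' = y"
        using inv_into_f_f[OF inj] V xy by auto
      moreover have "x \<noteq> y" using ne xy by auto
      then have "c x \<noteq> c y" using properD[OF c e(1) xy(1,2)] by simp
      ultimately show "c (inv_into (verts G) f x') \<noteq> c (inv_into (verts G) f y')" by simp
    qed
  next
    assume "bipartite G'"
    then obtain c where c: "\<forall>e\<in>edges G'. \<forall>x\<in>ends G' e. \<forall>y\<in>ends G' e. x \<noteq> y \<longrightarrow> c x \<noteq> (c y :: bool)"
      unfolding bipartite_def by blast
    show "bipartite G" 
    proof (rule bipartiteI[of _ "\<lambda>u. c (f u)"], intro ballI impI)
      fix e x y assume e: "e \<in> edges G" and x: "x \<in> ends G e" and y: "y \<in> ends G e" and ne: "x \<noteq> y"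
      have V: "x \<in> verts G" "y \<in> verts G" using sub e x y by auto
      have fne: "f x \<noteq> f y" using inj_on_eq_iff[OF inj V] ne by simp
      have ge: "g e \<in> edges G'" using bij_betw_apply[OF g e] .
      have eq: "ends G' (g e) = f ` ends G e" using en e by blast
      have fx: "f x \<in> ends G' (g e)" and fy: "f y \<in> ends G' (g e)" unfolding eq using x y by auto
      show "c (f x) \<noteq> c (f y)" using properD[OF c ge fx fy fne] .
    qed
  qed
qed


lemma ends_distinct:
  assumes wf: "wf_mgraph G" and a: "a \<in> edges G" and ea: "ends G a = {x,y}"
  shows "x \<noteq> y"
proof
  assume "x = y" then have ex: "ends G a = {x}" using ea by simp
  have "card (ends G a) = 2" using wf a by (simp add: wf_mgraph_def)
  then show False using ex by simp
qed

lemma H_bip: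
  assumes c1: "cubic G1" and c2: "cubic G2" and hv: "H_valid G1 x1 y1 a G2 x2 y2 b"
  shows "bipartite (H_op G1 x1 y1 a G2 x2 y2 b) \<longleftrightarrow> bipartite G1 \<and> bipartite G2"
proof -
  let ?H = "H_op G1 x1 y1 a G2 x2 y2 b"
  have a: "a \<in> edges G1" "ends G1 a = {x1,y1}" and b: "b \<in> edges G2" "ends G2 b = {x2,y2}"
    using hv by (auto simp: H_valid_def)
  have wf1: "wf_mgraph G1" using c1 by (simp add: cubic_def)
  have wf2: "wf_mgraph G2" using c2 by (simp add: cubic_def)
  show ?thesis
  proof
    assume "bipartite ?H"
    then obtain c where c: "\<forall>e\<in>edges ?H. \<forall>x\<in>ends ?H e. \<forall>y\<in>ends ?H e. x \<noteq> y \<longrightarrow> c x \<noteq> (c y :: bool)"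
      unfolding bipartite_def by blast
    have "bipartite G1"
    proof (rule H_side_bip[OF c1 a, of "\<lambda>u. c (Inl u)"], intro ballI impI)
      fix e p q assume e: "e \<in> edges G1 - {a}" and p: "p \<in> ends G1 e" and q: "q \<in> ends G1 e" and ne: "p \<noteq> q"
      have "Inl e \<in> edges ?H" "Inl p \<in> ends ?H (Inl e)" "Inl q \<in> ends ?H (Inl e)" "Inl p \<noteq> Inl q"
        using e p q ne by (auto simp: H_op_def)
      then show "c (Inl p) \<noteq> c (Inl q)" by (rule properD[OF c])
    qed
    moreover have "bipartite G2"
    proof (rule H_side_bip[OF c2 b, of "\<lambda>u. c (Inr u)"], intro ballI impI)
      fix e p q assume e: "e \<in> edges G2 - {b}" and p: "p \<in> ends G2 e" and q: "q \<in> ends G2 e" and ne: "p \<noteq> q"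
      have "Inr (Inl e) \<in> edges ?H" "Inr p \<in> ends ?H (Inr (Inl e))" "Inr q \<in> ends ?H (Inr (Inl e))" "Inr p \<noteq> Inr q"
        using e p q ne by (auto simp: H_op_def)
      then show "c (Inr p) \<noteq> c (Inr q)" by (rule properD[OF c])
    qed
    ultimately show "bipartite G1 \<and> bipartite G2" ..
  next
    assume B: "bipartite G1 \<and> bipartite G2"
    obtain d1 where
      d1: "\<forall>e\<in>edges G1. \<forall>x\<in>ends G1 e. \<forall>y\<in>ends G1 e. x \<noteq> y \<longrightarrow> d1 x \<noteq> (d1 y :: bool)"
      using conjunct1[OF B] unfolding bipartite_def by blast
    obtain d2 where
      d2: "\<forall>e\<in>edges G2. \<forall>x\<in>ends G2 e. \<forall>y\<in>ends G2 e. x \<noteq> y \<longrightarrow> d2 x \<noteq> (d2 y :: bool)"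
      using conjunct2[OF B] unfolding bipartite_def by blast
    have n1: "x1 \<noteq> y1" by (rule ends_distinct[OF wf1 a])
    have n2: "x2 \<noteq> y2" by (rule ends_distinct[OF wf2 b])
    have e1: "d1 x1 \<noteq> d1 y1" using properD[OF d1 a(1), of x1 y1] a(2) n1 by simp
    define d2' where "d2' = (\<lambda>u. if d2 x2 = d1 x1 then \<not> d2 u else d2 u)"
    have d2': "\<forall>e\<in>edges G2. \<forall>x\<in>ends G2 e. \<forall>y\<in>ends G2 e. x \<noteq> y \<longrightarrow> d2' x \<noteq> d2' y"
    proof (intro ballI impI)
      fix e x y assume "e \<in> edges G2" "x \<in> ends G2 e" "y \<in> ends G2 e" "x \<noteq> y"
      then have "d2 x \<noteq> d2 y" by (rule properD[OF d2])
      then show "d2' x \<noteq> d2' y" unfolding d2'_def by (cases "d2 x"; cases "d2 y"; simp)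
    qed
    have e2: "d2' x2 \<noteq> d2' y2" using properD[OF d2' b(1), of x2 y2] b(2) n2 by simp
    have hx: "d1 x1 \<noteq> d2' x2" unfolding d2'_def by (cases "d2 x2 = d1 x1") simp_all
    have hy: "d1 y1 \<noteq> d2' y2" using e1 e2 hx by (cases "d1 x1"; cases "d1 y1"; cases "d2' x2"; cases "d2' y2"; simp)
    let ?c = "case_sum d1 d2'"
    show "bipartite ?H" 
    proof (rule bipartiteI[of _ ?c], rule ballI)
      fix e assume "e \<in> edges ?H"
      then consider (L) e1 where "e = Inl e1" "e1 \<in> edges G1"
        | (M) e2 where "e = Inr (Inl e2)" "e2 \<in> edges G2"
        | (T) "e = Inr (Inr True)" | (F) "e = Inr (Inr False)"
        by (auto simp: H_op_def)
      then show "\<forall>p\<in>ends ?H e. \<forall>q\<in>ends ?H e. p \<noteq> q \<longrightarrow> ?c p \<noteq> ?c q"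
      proof cases
        case L
        have en: "ends ?H e = Inl ` ends G1 e1" by (simp add: H_op_def L)
        have "\<forall>x\<in>ends G1 e1. \<forall>y\<in>ends G1 e1. x \<noteq> y \<longrightarrow> d1 x \<noteq> d1 y" using d1 L(2) by (rule bspec)
        then show ?thesis unfolding en by (rule image_proper) simp
      next
        case M
        have en: "ends ?H e = Inr ` ends G2 e2" by (simp add: H_op_def M)
        have "\<forall>x\<in>ends G2 e2. \<forall>y\<in>ends G2 e2. x \<noteq> y \<longrightarrow> d2' x \<noteq> d2' y" using d2' M(2) by (rule bspec)
        then show ?thesis unfolding en by (rule image_proper) simp
      next
        case T
        have en: "ends ?H e = {Inl x1, Inr x2}" by (simp add: H_op_def T)
        have "?c (Inl x1) \<noteq> ?c (Inr x2)" using hx by simp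
        then show ?thesis unfolding en by (rule proper_pair[of ?c])
      next
        case F
        have en: "ends ?H e = {Inl y1, Inr y2}" by (simp add: H_op_def F)
        have "?c (Inl y1) \<noteq> ?c (Inr y2)" using hy by simp
        then show ?thesis unfolding en by (rule proper_pair[of ?c])
      qed
    qed
  qed
qed

lemma Y_bip:
  assumes c1: "cubic G1" and c2: "cubic G2" and yv: "Y_valid G1 v1 f1 G2 v2 f2"
  shows "bipartite (Y_op G1 v1 f1 G2 v2 f2) \<longleftrightarrow> bipartite G1 \<and> bipartite G2"
proof -
  let ?Y = "Y_op G1 v1 f1 G2 v2 f2"
  have v1: "v1 \<in> verts G1" and f1: "bij_betw f1 {0..<3} (incident_edges G1 v1)"
    and v2: "v2 \<in> verts G2" and f2: "bij_betw f2 {0..<3} (incident_edges G2 v2)"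
    using yv by (auto simp: Y_valid_def)
  have wf1: "wf_mgraph G1" using c1 by (simp add: cubic_def)
  have wf2: "wf_mgraph G2" using c2 by (simp add: cubic_def)
  show ?thesis
  proof
    assume "bipartite ?Y"
    then obtain c where c: "\<forall>e\<in>edges ?Y. \<forall>x\<in>ends ?Y e. \<forall>y\<in>ends ?Y e. x \<noteq> y \<longrightarrow> c x \<noteq> (c y :: bool)"
      unfolding bipartite_def by blast
    have "bipartite G1"
    proof (rule Y_side[OF c1 v1, of "\<lambda>u. c (Inl u)"], intro ballI impI)
      fix e p q assume e: "e \<in> edges G1 - incident_edges G1 v1" and p: "p \<in> ends G1 e" and q: "q \<in> ends G1 e" and ne: "p \<noteq> q"
      have "Inl e \<in> edges ?Y" "Inl p \<in> ends ?Y (Inl e)" "Inl q \<in> ends ?Y (Inl e)" "Inl p \<noteq> Inl q"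
        using e p q ne by (auto simp: Y_op_def)
      then show "c (Inl p) \<noteq> c (Inl q)" by (rule properD[OF c])
    qed
    moreover have "bipartite G2"
    proof (rule Y_side[OF c2 v2, of "\<lambda>u. c (Inr u)"], intro ballI impI)
      fix e p q assume e: "e \<in> edges G2 - incident_edges G2 v2" and p: "p \<in> ends G2 e" and q: "q \<in> ends G2 e" and ne: "p \<noteq> q"
      have "Inr (Inl e) \<in> edges ?Y" "Inr p \<in> ends ?Y (Inr (Inl e))" "Inr q \<in> ends ?Y (Inr (Inl e))" "Inr p \<noteq> Inr q"
        using e p q ne by (auto simp: Y_op_def)
      then show "c (Inr p) \<noteq> c (Inr q)" by (rule properD[OF c])
    qed
    ultimately show "bipartite G1 \<and> bipartite G2" ..
  next
    assume B: "bipartite G1 \<and> bipartite G2"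
    obtain d1 where
      d1: "\<forall>e\<in>edges G1. \<forall>x\<in>ends G1 e. \<forall>y\<in>ends G1 e. x \<noteq> y \<longrightarrow> d1 x \<noteq> (d1 y :: bool)"
      using conjunct1[OF B] unfolding bipartite_def by blast
    obtain d2 where
      d2: "\<forall>e\<in>edges G2. \<forall>x\<in>ends G2 e. \<forall>y\<in>ends G2 e. x \<noteq> y \<longrightarrow> d2 x \<noteq> (d2 y :: bool)"
      using conjunct2[OF B] unfolding bipartite_def by blast
    define d2' where "d2' = (\<lambda>u. if d2 v2 = d1 v1 then \<not> d2 u else d2 u)"
    have d2': "\<forall>e\<in>edges G2. \<forall>x\<in>ends G2 e. \<forall>y\<in>ends G2 e. x \<noteq> y \<longrightarrow> d2' x \<noteq> d2' y"
    proof (intro ballI impI)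
      fix e x y assume "e \<in> edges G2" "x \<in> ends G2 e" "y \<in> ends G2 e" "x \<noteq> y"
      then have "d2 x \<noteq> d2 y" by (rule properD[OF d2])
      then show "d2' x \<noteq> d2' y" unfolding d2'_def by (cases "d2 x"; cases "d2 y"; simp)
    qed
    have hv: "d1 v1 \<noteq> d2' v2" unfolding d2'_def by (cases "d2 v2 = d1 v1") simp_all
    let ?c = "case_sum d1 d2'"
    show "bipartite ?Y" 
    proof (rule bipartiteI[of _ ?c], rule ballI)
      fix e assume "e \<in> edges ?Y"
      then consider (L) e1 where "e = Inl e1" "e1 \<in> edges G1"
        | (M) e2 where "e = Inr (Inl e2)" "e2 \<in> edges G2"
        | (N) j where "e = Inr (Inr j)" "j \<in> {0..<3}"
        by (auto simp: Y_op_def)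
      then show "\<forall>p\<in>ends ?Y e. \<forall>q\<in>ends ?Y e. p \<noteq> q \<longrightarrow> ?c p \<noteq> ?c q"
      proof cases
        case L
        have en: "ends ?Y e = Inl ` ends G1 e1" by (simp add: Y_op_def L)
        have "\<forall>x\<in>ends G1 e1. \<forall>y\<in>ends G1 e1. x \<noteq> y \<longrightarrow> d1 x \<noteq> d1 y" using d1 L(2) by (rule bspec)
        then show ?thesis unfolding en by (rule image_proper) simp
      next
        case M
        have en: "ends ?Y e = Inr ` ends G2 e2" by (simp add: Y_op_def M)
        have "\<forall>x\<in>ends G2 e2. \<forall>y\<in>ends G2 e2. x \<noteq> y \<longrightarrow> d2' x \<noteq> d2' y" using d2' M(2) by (rule bspec)
        then show ?thesis unfolding en by (rule image_proper) simp
      next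
        case N
        have i1: "f1 j \<in> incident_edges G1 v1" using bij_betw_apply[OF f1 N(2)] .
        have i2: "f2 j \<in> incident_edges G2 v2" using bij_betw_apply[OF f2 N(2)] .
        note o1 = other_end_props[OF wf1 i1]
        note o2 = other_end_props[OF wf2 i2]
        let ?s1 = "other_end G1 v1 (f1 j)" and ?s2 = "other_end G2 v2 (f2 j)"
        have s1: "d1 ?s1 \<noteq> d1 v1"
        proof -
          have "f1 j \<in> edges G1" "?s1 \<in> ends G1 (f1 j)" "v1 \<in> ends G1 (f1 j)" "?s1 \<noteq> v1" using o1 by auto
          then show ?thesis by (rule properD[OF d1])
        qed
        have s2: "d2' ?s2 \<noteq> d2' v2"
        proof -
          have "f2 j \<in> edges G2" "?s2 \<in> ends G2 (f2 j)" "v2 \<in> ends G2 (f2 j)" "?s2 \<noteq> v2" using o2 by auto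
          then show ?thesis by (rule properD[OF d2'])
        qed
        have "d1 ?s1 \<noteq> d2' ?s2" using s1 s2 hv by (cases "d1 ?s1"; cases "d1 v1"; cases "d2' ?s2"; cases "d2' v2"; simp)
        then have neq: "?c (Inl ?s1) \<noteq> ?c (Inr ?s2)" by simp
        have en: "ends ?Y e = {Inl ?s1, Inr ?s2}" by (simp add: Y_op_def N)
        show ?thesis unfolding en by (rule proper_pair[of ?c, OF neq])
      qed
    qed
  qed
qed

theorem lemma2:
  fixes G :: "('v, 'e) mgraph" and G1 :: "('v1, 'e1) mgraph" and G2 :: "('v2, 'e2) mgraph"
  assumes "cubic G"
    and "is_H_sum G G1 G2 \<or> is_Y_sum G G1 G2"
  shows "bipartite G \<longleftrightarrow> bipartite G1 \<and> bipartite G2"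
proof -
  have wf: "wf_mgraph G" using assms(1) by (simp add: cubic_def)
  from assms(2) show ?thesis
  proof
    assume "is_H_sum G G1 G2"
    then obtain x1 y1 a x2 y2 b where c1: "cubic G1" and c2: "cubic G2"
      and hv: "H_valid G1 x1 y1 a G2 x2 y2 b" and iso: "mg_iso G (H_op G1 x1 y1 a G2 x2 y2 b)"
      unfolding is_H_sum_def by blast
    show ?thesis using iso_bip[OF wf iso] H_bip[OF c1 c2 hv] by simp
  next
    assume "is_Y_sum G G1 G2"
    then obtain v1 f1 v2 f2 where c1: "cubic G1" and c2: "cubic G2"
      and yv: "Y_valid G1 v1 f1 G2 v2 f2" and iso: "mg_iso G (Y_op G1 v1 f1 G2 v2 f2)"
      unfolding is_Y_sum_def by blast
    show ?thesis using iso_bip[OF wf iso] Y_bip[OF c1 c2 yv] by simp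
  qed
qed

end
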